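(* Let $C(c_0)$ be the vector space of all continuous maps $f\colon c_0\to c_0$ (over $\mathbb{R}$), endowed with the linear topology of uniform convergence on bounded subsets of $c_0$. Let $\mathscr{K}(c_0)\subseteq C(c_0)$ be the set of all $f\in C(c_0)$ for which there is no nonempty open interval $I\subseteq\mathbb{R}$ and no differentiable map $u\colon I\to c_0$ with $u'(t)=f(u(t))$ for all $t\in I$. Then $\mathscr{K}(c_0)$ is $\mathfrak{c}$-spaceable in $C(c_0)$; that is, there is a closed linear subspace $V$ of $C(c_0)$ with $\dim V=\mathfrak{c}$ and $V\subseteq \mathscr{K}(c_0)\cup\{0\}$.
   Context: $c_0$ denotes the Banach space of real null sequences with the sup norm. $\mathfrak{c}$ denotes the cardinality of the continuum. For a cardinal $\mu$ and a subset $A$ of a topological vector space $E$, $A$ is called $\mu$-spaceable if $A\cup\{0\}$ contains a closed linear subspace of $E$ of (algebraic) dimension $\mu$. *)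

theory Defs
  imports "HOL-Analysis.Analysis" "HOL-Library.Function_Algebras" "HOL-Library.Equipollence"
begin

section \<open>The Banach space c_0 of real null sequences with the sup norm\<close>

text \<open>c_0 is realised as the subspace of the space of bounded (continuous) real
  sequences with the sup norm consisting of the sequences converging to 0.\<close>

definition c0_set :: "(nat \<Rightarrow>\<^sub>C real) set" where
  "c0_set = {x. (\<lambda>n. apply_bcontfun x n) \<longlonglongrightarrow> 0}"

typedef c0 = c0_set
  morphisms c0_rep Abs_c0
  by (rule exI[of _ 0]) (simp add: c0_set_def)

setup_lifting type_definition_c0

instantiation c0 :: real_normed_vector
begin

lift_definition zero_c0 :: c0 is 0 by (simp add: c0_set_def)
lift_definition plus_c0 :: "c0 \<Rightarrow> c0 \<Rightarrow> c0" is "(+)"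
  by (auto simp: c0_set_def intro: tendsto_add_zero)
lift_definition minus_c0 :: "c0 \<Rightarrow> c0 \<Rightarrow> c0" is "(-)"
  by (auto simp: c0_set_def dest: tendsto_diff[where b=0 and a=0, simplified])
lift_definition uminus_c0 :: "c0 \<Rightarrow> c0" is uminus
  by (auto simp: c0_set_def dest: tendsto_minus[where a=0, simplified])
lift_definition scaleR_c0 :: "real \<Rightarrow> c0 \<Rightarrow> c0" is scaleR
  by (auto simp: c0_set_def dest: tendsto_mult_right_zero)
lift_definition norm_c0 :: "c0 \<Rightarrow> real" is norm .
lift_definition dist_c0 :: "c0 \<Rightarrow> c0 \<Rightarrow> real" is dist .
definition sgn_c0 :: "c0 \<Rightarrow> c0" where "sgn_c0 x = scaleR (inverse (norm_class.norm x)) x"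
definition uniformity_c0 :: "(c0 \<times> c0) filter" where
  "uniformity_c0 = (INF e\<in>{0 <..}. principal {(x, y). dist x y < e})"
definition open_c0 :: "c0 set \<Rightarrow> bool" where
  "open_c0 S = (\<forall>x\<in>S. \<forall>\<^sub>F (x', y) in uniformity. x' = x \<longrightarrow> y \<in> S)"

instance
proof
  fix x y z :: c0 and a b :: real
  show "x + y + z = x + (y + z)" by transfer (simp add: algebra_simps)
  show "x + y = y + x" by transfer (simp add: algebra_simps)
  show "0 + x = x" by transfer simp
  show "- x + x = 0" by transfer simp
  show "x - y = x + - y" by transfer simp
  show "a *\<^sub>R (x + y) = a *\<^sub>R x + a *\<^sub>R y" by transfer (simp add: algebra_simps)
  show "(a + b) *\<^sub>R x = a *\<^sub>R x + b *\<^sub>R x" by transfer (simp add: algebra_simps)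
  show "a *\<^sub>R b *\<^sub>R x = (a * b) *\<^sub>R x" by transfer simp
  show "1 *\<^sub>R x = x" by transfer simp
  show "dist x y = norm (x - y)" by transfer (simp add: dist_norm)
  show "sgn x = scaleR (inverse (norm x)) x" by (simp add: sgn_c0_def)
  show "norm (x + y) \<le> norm x + norm y" by transfer (rule norm_triangle_ineq)
  show "norm (a *\<^sub>R x) = \<bar>a\<bar> * norm x" by transfer simp
  show "(norm x = 0) = (x = 0)" by transfer simp
qed (simp_all add: uniformity_c0_def open_c0_def)

end

section \<open>The space C(c_0) and its topology of uniform convergence on bounded sets\<close>

text \<open>Maps from c_0 to c_0 form a real vector space under pointwise operations
  (HOL-Library.Function_Algebras for +, 0, -; scalar multiplication below).\<close>

definition fscale :: "real \<Rightarrow> (c0 \<Rightarrow> c0) \<Rightarrow> (c0 \<Rightarrow> c0)" where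
  "fscale c f = (\<lambda>x. c *\<^sub>R f x)"

definition Cc0 :: "(c0 \<Rightarrow> c0) set" where
  "Cc0 = {f. continuous_on UNIV f}"

definition ucb_open :: "(c0 \<Rightarrow> c0) set \<Rightarrow> bool" where
  "ucb_open U \<longleftrightarrow> U \<subseteq> Cc0 \<and>
     (\<forall>f\<in>U. \<exists>B. bounded B \<and> (\<exists>e>0. {g\<in>Cc0. \<forall>x\<in>B. dist (g x) (f x) < e} \<subseteq> U))"

lemma istopology_ucb_open: "istopology ucb_open"
  unfolding istopology_def
proof (intro conjI allI impI ballI)
  fix S T assume S: "ucb_open S" and T: "ucb_open T"
  show "ucb_open (S \<inter> T)"
    unfolding ucb_open_def
  proof (intro conjI ballI)
    show "S \<inter> T \<subseteq> Cc0" using S unfolding ucb_open_def by blast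
    fix f assume f: "f \<in> S \<inter> T"
    obtain B1 e1 where B1: "bounded B1" "e1 > 0" "{g\<in>Cc0. \<forall>x\<in>B1. dist (g x) (f x) < e1} \<subseteq> S"
      using S f unfolding ucb_open_def by blast
    obtain B2 e2 where B2: "bounded B2" "e2 > 0" "{g\<in>Cc0. \<forall>x\<in>B2. dist (g x) (f x) < e2} \<subseteq> T"
      using T f unfolding ucb_open_def by blast
    show "\<exists>B. bounded B \<and> (\<exists>e>0. {g\<in>Cc0. \<forall>x\<in>B. dist (g x) (f x) < e} \<subseteq> S \<inter> T)"
    proof (intro exI conjI)
      show "bounded (B1 \<union> B2)" using B1 B2 by simp
      show "min e1 e2 > 0" using B1 B2 by simp
      show "{g\<in>Cc0. \<forall>x\<in>B1 \<union> B2. dist (g x) (f x) < min e1 e2} \<subseteq> S \<inter> T"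
      proof
        fix g assume g: "g \<in> {g\<in>Cc0. \<forall>x\<in>B1 \<union> B2. dist (g x) (f x) < min e1 e2}"
        then have "g \<in> {g\<in>Cc0. \<forall>x\<in>B1. dist (g x) (f x) < e1}" by auto
        moreover from g have "g \<in> {g\<in>Cc0. \<forall>x\<in>B2. dist (g x) (f x) < e2}" by auto
        ultimately show "g \<in> S \<inter> T" using B1(3) B2(3) by blast
      qed
    qed
  qed
next
  fix K assume K: "\<forall>S\<in>K. ucb_open S"
  show "ucb_open (\<Union>K)"
    unfolding ucb_open_def
  proof (intro conjI ballI)
    show "\<Union>K \<subseteq> Cc0"
    proof
      fix h assume "h \<in> \<Union>K"
      then obtain S where "S \<in> K" "h \<in> S" by blast
      moreover have "ucb_open S" using K \<open>S \<in> K\<close> by blast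
      ultimately show "h \<in> Cc0" unfolding ucb_open_def by blast
    qed
    fix f assume "f \<in> \<Union>K"
    then obtain S where S: "S \<in> K" "f \<in> S" by blast
    then have "ucb_open S" using K by blast
    then obtain B e where "bounded B" "e > 0" "{g\<in>Cc0. \<forall>x\<in>B. dist (g x) (f x) < e} \<subseteq> S"
      using S(2) unfolding ucb_open_def by blast
    moreover have "S \<subseteq> \<Union>K" using S(1) by blast
    ultimately show "\<exists>B. bounded B \<and> (\<exists>e>0. {g\<in>Cc0. \<forall>x\<in>B. dist (g x) (f x) < e} \<subseteq> \<Union>K)"
      by blast
  qed
qed

definition ucb_topology :: "(c0 \<Rightarrow> c0) topology" where
  "ucb_topology = topology ucb_open"

definition Kc0 :: "(c0 \<Rightarrow> c0) set" where
  "Kc0 = {f\<in>Cc0. \<not> (\<exists>I u. open I \<and> is_interval I \<and> I \<noteq> {} \<and>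
            (\<forall>t\<in>I. (u has_vector_derivative f (u t)) (at t)))}"

text \<open>A is \<mu>-spaceable (\<mu> given by a representative set M of that cardinality) if
  A \<union> {0} contains a closed linear subspace of algebraic dimension \<mu>, i.e. one
  having a Hamel basis equipollent to M.\<close>

definition spaceable :: "'b set \<Rightarrow> (c0 \<Rightarrow> c0) set \<Rightarrow> bool" where
  "spaceable M A \<longleftrightarrow> (\<exists>V. closedin ucb_topology V \<and> module.subspace fscale V \<and>
      (\<exists>B. \<not> module.dependent fscale B \<and> module.span fscale B = V \<and> B \<approx> M) \<and>
      V \<subseteq> A \<union> {0})"

end

theory Submission
  imports Defs "HOL-Library.Nat_Bijection"
begin

definition cp :: "nat \<Rightarrow> c0 \<Rightarrow> real" where
  "cp n x = apply_bcontfun (c0_rep x) n"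

definition mk :: "(nat \<Rightarrow> real) \<Rightarrow> c0" where
  "mk s = Abs_c0 (Bcontfun s)"

lemma pi_mk:
  assumes "s \<longlonglongrightarrow> 0"
  shows "cp n (mk s) = s n"
proof -
  have "bounded (range s)"
    using assms by (metis Bseq_eq_bounded convergent_imp_Bseq convergentI)
  then have b: "s \<in> bcontfun" by (simp add: bcontfun_def)
  then have "Bcontfun s \<in> c0_set"
    using assms by (simp add: c0_set_def Bcontfun_inverse)
  then show ?thesis
    by (simp add: cp_def mk_def Abs_c0_inverse Bcontfun_inverse b)
qed

lemma pi_tendsto: "(\<lambda>n. cp n x) \<longlonglongrightarrow> 0"
  using c0_rep[of x] by (simp add: cp_def c0_set_def)

lemma pi_add[simp]: "cp n (x + y) = cp n x + cp n y"
  by (simp add: cp_def plus_c0.rep_eq)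
lemma pi_diff[simp]: "cp n (x - y) = cp n x - cp n y"
  by (simp add: cp_def minus_c0.rep_eq)
lemma pi_uminus[simp]: "cp n (- x) = - cp n x"
  by (simp add: cp_def uminus_c0.rep_eq)
lemma pi_scale[simp]: "cp n (c *\<^sub>R x) = c * cp n x"
  by (simp add: cp_def scaleR_c0.rep_eq)
lemma pi_zero[simp]: "cp n 0 = 0"
  by (simp add: cp_def zero_c0.rep_eq)

lemma c0_eqI: "(\<And>n. cp n x = cp n y) \<Longrightarrow> x = y"
  unfolding cp_def by (metis bcontfun_eqI c0_rep_inject)

lemma abs_pi_le: "\<bar>cp n x\<bar> \<le> norm x"
  unfolding cp_def norm_c0.rep_eq using norm_bounded[of "c0_rep x" n] by simp

lemma norm_le_c0: "(\<And>n. \<bar>cp n x\<bar> \<le> M) \<Longrightarrow> norm x \<le> M"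
  unfolding norm_c0.rep_eq cp_def by (rule norm_bound) simp

lemma bl_pi: "bounded_linear (cp n)"
  by (rule bounded_linear_intro[where K=1]) (auto simp: abs_pi_le)

lemma sqrt_deriv: "(x::real) \<noteq> 0 \<Longrightarrow> DERIV sqrt x :> inverse (2 * sqrt \<bar>x\<bar>)"
proof (rule DERIV_real_sqrt_generic)
  assume "x < 0"
  then have a: "\<bar>x\<bar> = - x" by simp
  have "sqrt (- x) = - sqrt x" by (rule real_sqrt_minus)
  then show "inverse (2 * sqrt \<bar>x\<bar>) = - inverse (sqrt x) / 2"
    unfolding a by (simp add: inverse_mult_distrib)
qed (auto simp: inverse_mult_distrib)

lemma mvt_ge:
  fixes h :: "real \<Rightarrow> real"
  assumes "a \<le> b" "continuous_on {a..b} h"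
    and d: "\<And>t. a < t \<Longrightarrow> t < b \<Longrightarrow> \<exists>D. (h has_real_derivative D) (at t) \<and> m \<le> D"
  shows "m * (b - a) \<le> h b - h a"
proof (cases "a = b")
  case True then show ?thesis by simp
next
  case False
  then have ab: "a < b" using assms by simp
  have "\<And>x. a < x \<Longrightarrow> x < b \<Longrightarrow> h differentiable (at x)"
    using d real_differentiable_def by blast
  then obtain l z where z: "a < z" "z < b" "DERIV h z :> l" "h b - h a = (b - a) * l"
    using MVT[OF ab assms(2)] by blast
  obtain D where D: "(h has_real_derivative D) (at z)" "m \<le> D" using d z by blast
  have "l = D" using DERIV_unique z(3) D(1) by blast
  then show ?thesis using z D ab by (simp add: mult.commute mult_right_mono)
qed

lemma scalar_ode:
  fixes w :: "real \<Rightarrow> real"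
  assumes t01: "t0 < t1" and bp: "\<beta> > 0" and ep: "e > 0"
    and der: "\<And>t. t0 \<le> t \<Longrightarrow> t \<le> t1 \<Longrightarrow> (w has_real_derivative \<beta> * (sqrt \<bar>w t\<bar> + e)) (at t)"
  shows "\<beta> * (t1 - t0) / 2 \<le> sqrt (w t1) - sqrt (w t0)"
proof -
  have cw: "continuous_on {t0..t1} w"
    using der by (meson DERIV_atLeastAtMost_imp_continuous_on)
  have ch: "continuous_on {t0..t1} (\<lambda>t. sqrt (w t))"
    using cw by (intro continuous_intros)
  have pos: "\<beta> * (sqrt \<bar>w t\<bar> + e) > 0" for t
    using bp ep by (simp add: add_nonneg_pos)
  have mono: "w x < w y" if "t0 \<le> x" "x < y" "y \<le> t1" for x y
  proof (rule DERIV_pos_imp_increasing[OF that(2)])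
    fix t assume "x \<le> t" "t \<le> y"
    then show "\<exists>D. DERIV w t :> D \<and> D > 0" using der[of t] pos[of t] that by auto
  qed
  have hd: "\<exists>D. ((\<lambda>t. sqrt (w t)) has_real_derivative D) (at t) \<and> \<beta> / 2 \<le> D"
    if "t0 \<le> t" "t \<le> t1" "w t \<noteq> 0" for t
  proof -
    let ?s = "sqrt \<bar>w t\<bar>"
    have sp: "?s > 0" using that by simp
    have "((\<lambda>t. sqrt (w t)) has_real_derivative inverse (2 * ?s) * (\<beta> * (?s + e))) (at t)"
      using DERIV_chain2[OF sqrt_deriv[OF that(3)] der[OF that(1,2)]] .
    moreover have "\<beta> / 2 \<le> inverse (2 * ?s) * (\<beta> * (?s + e))"
    proof -
      have "inverse (2 * ?s) * (\<beta> * (?s + e)) = \<beta> / 2 + \<beta> * e / (2 * ?s)"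
        using sp by (simp add: field_simps)
      moreover have "\<beta> * e / (2 * ?s) \<ge> 0" using sp bp ep by simp
      ultimately show ?thesis by linarith
    qed
    ultimately show ?thesis by blast
  qed
  show ?thesis
  proof (cases "\<exists>z. t0 < z \<and> z < t1 \<and> w z = 0")
    case True
    then obtain z where z: "t0 < z" "z < t1" "w z = 0" by blast
    have "\<beta> / 2 * (z - t0) \<le> sqrt (w z) - sqrt (w t0)"
    proof (rule mvt_ge)
      show "continuous_on {t0..z} (\<lambda>t. sqrt (w t))"
        using ch z by (auto elim: continuous_on_subset)
      fix t assume "t0 < t" "t < z"
      then show "\<exists>D. ((\<lambda>t. sqrt (w t)) has_real_derivative D) (at t) \<and> \<beta> / 2 \<le> D"
        using hd mono[of t z] z by fastforce
    qed (use z in auto)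
    moreover have "\<beta> / 2 * (t1 - z) \<le> sqrt (w t1) - sqrt (w z)"
    proof (rule mvt_ge)
      show "continuous_on {z..t1} (\<lambda>t. sqrt (w t))"
        using ch z by (auto elim: continuous_on_subset)
      fix t assume "z < t" "t < t1"
      then show "\<exists>D. ((\<lambda>t. sqrt (w t)) has_real_derivative D) (at t) \<and> \<beta> / 2 \<le> D"
        using hd mono[of z t] z by fastforce
    qed (use z in auto)
    moreover have "\<beta> * (t1 - t0) / 2 = \<beta> / 2 * (z - t0) + \<beta> / 2 * (t1 - z)"
      by (simp add: field_simps)
    ultimately show ?thesis by linarith
  next
    case False
    have "\<beta> / 2 * (t1 - t0) \<le> sqrt (w t1) - sqrt (w t0)"
    proof (rule mvt_ge)
      fix t assume "t0 < t" "t < t1"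
      then show "\<exists>D. ((\<lambda>t. sqrt (w t)) has_real_derivative D) (at t) \<and> \<beta> / 2 \<le> D"
        using hd False by fastforce
    qed (use t01 ch in auto)
    then show ?thesis by simp
  qed
qed

lemma scalar_ode_abs:
  fixes w :: "real \<Rightarrow> real"
  assumes t01: "t0 < t1" and bp: "\<beta> \<noteq> 0" and ep: "e > 0"
    and der: "\<And>t. t0 \<le> t \<Longrightarrow> t \<le> t1 \<Longrightarrow> (w has_real_derivative \<beta> * (sqrt \<bar>w t\<bar> + e)) (at t)"
  shows "\<bar>\<beta>\<bar> * (t1 - t0) / 2 \<le> \<bar>sqrt (w t1) - sqrt (w t0)\<bar>"
proof (cases "\<beta> > 0")
  case True
  have "\<bar>\<beta>\<bar> = \<beta>" using True by simp
  moreover have "sqrt (w t1) - sqrt (w t0) \<le> \<bar>sqrt (w t1) - sqrt (w t0)\<bar>" by (rule abs_ge_self)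
  ultimately show ?thesis using scalar_ode[OF t01 True ep der] by linarith
next
  case False
  then have nb: "- \<beta> > 0" using bp by simp
  have "(- \<beta>) * (t1 - t0) / 2 \<le> sqrt (- w t1) - sqrt (- w t0)"
  proof (rule scalar_ode[OF t01 nb ep])
    fix t assume "t0 \<le> t" "t \<le> t1"
    then have "((\<lambda>t. - w t) has_real_derivative - (\<beta> * (sqrt \<bar>w t\<bar> + e))) (at t)"
      using der by (intro DERIV_minus) auto
    then show "((\<lambda>t. - w t) has_real_derivative - \<beta> * (sqrt \<bar>- w t\<bar> + e)) (at t)"
      by simp
  qed
  then show ?thesis using False by (simp add: real_sqrt_minus)
qed

definition kk :: "nat \<Rightarrow> nat" where "kk n = fst (prod_decode n)"
definition pk :: "nat \<Rightarrow> nat" where "pk k = prod_encode (k, 0)"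
definition eps :: "nat \<Rightarrow> real" where "eps n = inverse (real (Suc n))"
definition coef :: "(c0 \<Rightarrow> c0) \<Rightarrow> nat \<Rightarrow> real" where
  "coef g k = cp (pk k) (g 0) / eps (pk k)"
definition VV :: "(c0 \<Rightarrow> c0) set" where
  "VV = {g\<in>Cc0. \<forall>x n. cp n (g x) = coef g (kk n) * (sqrt \<bar>cp n x\<bar> + eps n)}"
definition G :: "(nat \<Rightarrow> real) \<Rightarrow> c0 \<Rightarrow> c0" where
  "G b = (\<lambda>x. mk (\<lambda>n. b (kk n) * (sqrt \<bar>cp n x\<bar> + eps n)))"

lemma eps_pos[simp]: "eps n > 0" by (simp add: eps_def)
lemma eps_nz[simp]: "eps n \<noteq> 0" using eps_pos[of n] by linarith
lemma kk_pk[simp]: "kk (pk k) = k" by (simp add: kk_def pk_def)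
lemma eps_tendsto: "eps \<longlonglongrightarrow> 0"
  unfolding eps_def by (rule LIMSEQ_inverse_real_of_nat)

lemma G_tendsto:
  assumes b: "\<And>k. \<bar>b k\<bar> \<le> 1"
  shows "(\<lambda>n. b (kk n) * (sqrt \<bar>cp n x\<bar> + eps n)) \<longlonglongrightarrow> 0"
proof (rule Lim_null_comparison)
  have "(\<lambda>n. sqrt \<bar>cp n x\<bar>) \<longlonglongrightarrow> sqrt \<bar>0\<bar>"
    by (intro tendsto_intros pi_tendsto)
  then show "(\<lambda>n. sqrt \<bar>cp n x\<bar> + eps n) \<longlonglongrightarrow> 0"
    using tendsto_add[OF _ eps_tendsto] by fastforce
  show "\<forall>\<^sub>F n in sequentially. norm (b (kk n) * (sqrt \<bar>cp n x\<bar> + eps n)) \<le> sqrt \<bar>cp n x\<bar> + eps n"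
  proof (intro always_eventually allI)
    fix n
    have "0 \<le> sqrt \<bar>cp n x\<bar> + eps n" using eps_pos[of n] by (simp add: add_nonneg_pos less_imp_le)
    then show "norm (b (kk n) * (sqrt \<bar>cp n x\<bar> + eps n)) \<le> sqrt \<bar>cp n x\<bar> + eps n"
      using b[of "kk n"] by (simp add: abs_mult mult_left_le_one_le)
  qed
qed

lemma pi_G: "(\<And>k. \<bar>b k\<bar> \<le> 1) \<Longrightarrow> cp n (G b x) = b (kk n) * (sqrt \<bar>cp n x\<bar> + eps n)"
  unfolding G_def by (rule pi_mk[OF G_tendsto])

lemma coef_G: "(\<And>k. \<bar>b k\<bar> \<le> 1) \<Longrightarrow> coef (G b) k = b k"
  unfolding coef_def using eps_pos[of "pk k"] by (simp add: pi_G)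

lemma sqrt_abs_diff: "\<bar>sqrt \<bar>a\<bar> - sqrt \<bar>c\<bar>\<bar> \<le> sqrt \<bar>a - c\<bar>"
proof -
  have key: "\<bar>sqrt u - sqrt v\<bar> \<le> sqrt \<bar>u - v\<bar>" if "0 \<le> v" "v \<le> u" for u v :: real
  proof -
    have "sqrt v \<le> sqrt u" using that by simp
    moreover have "(sqrt u - sqrt v)^2 \<le> u - v"
    proof -
      have "(sqrt u - sqrt v)^2 = u + v - 2 * sqrt u * sqrt v"
        using that by (simp add: power2_eq_square algebra_simps)
      moreover have "sqrt v * sqrt v \<le> sqrt u * sqrt v"
        by (rule mult_right_mono) (simp_all add: that)
      moreover have "sqrt v * sqrt v = v" using that by simp
      ultimately show ?thesis by linarith
    qed
    ultimately show ?thesis using that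
      by (metis abs_of_nonneg diff_ge_0_iff_ge real_le_rsqrt)
  qed
  have "\<bar>sqrt \<bar>a\<bar> - sqrt \<bar>c\<bar>\<bar> \<le> sqrt \<bar>\<bar>a\<bar> - \<bar>c\<bar>\<bar>"
    using key[of "\<bar>c\<bar>" "\<bar>a\<bar>"] key[of "\<bar>a\<bar>" "\<bar>c\<bar>"]
    by (cases "\<bar>c\<bar> \<le> \<bar>a\<bar>") (auto simp: abs_minus_commute)
  also have "\<dots> \<le> sqrt \<bar>a - c\<bar>" by simp
  finally show ?thesis .
qed

lemma G_dist:
  assumes b: "\<And>k. \<bar>b k\<bar> \<le> 1"
  shows "dist (G b x) (G b y) \<le> sqrt (dist x y)"
proof -
  have "norm (G b x - G b y) \<le> sqrt (norm (x - y))"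
  proof (rule norm_le_c0)
    fix n
    have "\<bar>cp n (G b x - G b y)\<bar> = \<bar>b (kk n)\<bar> * \<bar>sqrt \<bar>cp n x\<bar> - sqrt \<bar>cp n y\<bar>\<bar>"
      by (simp add: pi_G[OF b] abs_mult[symmetric] algebra_simps)
    also have "\<dots> \<le> \<bar>sqrt \<bar>cp n x\<bar> - sqrt \<bar>cp n y\<bar>\<bar>"
      using b[of "kk n"] by (simp add: mult_left_le_one_le)
    also have "\<dots> \<le> sqrt \<bar>cp n x - cp n y\<bar>" by (rule sqrt_abs_diff)
    also have "\<dots> \<le> sqrt (norm (x - y))"
      using abs_pi_le[of n "x - y"] by simp
    finally show "\<bar>cp n (G b x - G b y)\<bar> \<le> sqrt (norm (x - y))" .
  qed
  then show ?thesis by (simp add: dist_norm)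
qed

lemma G_cont:
  assumes b: "\<And>k. \<bar>b k\<bar> \<le> 1"
  shows "G b \<in> Cc0"
  unfolding Cc0_def
proof (simp add: continuous_on_iff, intro allI impI)
  fix x and e :: real assume e: "0 < e"
  show "\<exists>d>0. \<forall>x'. dist x' x < d \<longrightarrow> dist (G b x') (G b x) < e"
  proof (intro exI[of _ "e^2"] conjI allI impI)
    show "0 < e^2" using e by simp
    fix x' assume "dist x' x < e^2"
    then have "sqrt (dist x' x) < e"
      using e real_sqrt_less_mono by fastforce
    then show "dist (G b x') (G b x) < e" using G_dist[where b=b and x=x' and y=x, OF b] by linarith
  qed
qed

lemma G_in_VV: "(\<And>k. \<bar>b k\<bar> \<le> 1) \<Longrightarrow> G b \<in> VV"
  unfolding VV_def using G_cont by (auto simp: coef_G pi_G)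

lemma VV_ext:
  assumes "g \<in> VV" "h \<in> VV" "\<And>k. coef g k = coef h k"
  shows "g = h"
proof
  fix x
  show "g x = h x"
    by (rule c0_eqI) (use assms in \<open>simp add: VV_def\<close>)
qed

lemma vs_fscale: "vector_space fscale"
  by unfold_locales (simp_all add: fscale_def fun_eq_iff scaleR_add_right scaleR_add_left)

lemma fscale_apply[simp]: "fscale c f x = c *\<^sub>R f x"
  by (simp add: fscale_def)

lemma coef_add: "coef (g + h) k = coef g k + coef h k"
  by (simp add: coef_def add_divide_distrib)
lemma coef_scale: "coef (fscale c g) k = c * coef g k"
  by (simp add: coef_def)
lemma coef_zero: "coef 0 k = 0"
  by (simp add: coef_def)

lemma subspace_VV: "module.subspace fscale VV"
proof -
  interpret vector_space fscale by (rule vs_fscale)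
  show ?thesis
  proof (rule subspaceI)
    show "0 \<in> VV" by (simp add: VV_def Cc0_def coef_zero)
  next
    fix g h assume "g \<in> VV" "h \<in> VV"
    then show "g + h \<in> VV"
      unfolding VV_def Cc0_def
      by (auto simp: coef_add algebra_simps intro: continuous_on_add)
  next
    fix c g assume "g \<in> VV"
    have "continuous_on UNIV (fscale c g)"
      using \<open>g \<in> VV\<close> unfolding fscale_def VV_def Cc0_def by (auto intro: continuous_intros)
    then show "fscale c g \<in> VV"
      using \<open>g \<in> VV\<close> unfolding VV_def Cc0_def by (auto simp: coef_scale)
  qed
qed

lemma openin_ucb: "openin ucb_topology = ucb_open"
  unfolding ucb_topology_def by (rule topology_inverse'[OF istopology_ucb_open])

lemma topspace_ucb: "topspace ucb_topology = Cc0"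
proof -
  have "ucb_open Cc0"
    unfolding ucb_open_def
    apply (intro conjI ballI subset_refl)
    apply (rule exI[of _ "{}"])
    using zero_less_one by blast
  moreover have "S \<subseteq> Cc0" if "ucb_open S" for S using that by (simp add: ucb_open_def)
  ultimately show ?thesis
    unfolding topspace_def openin_ucb by blast
qed

lemma closed_VV: "closedin ucb_topology VV"
  unfolding closedin_def topspace_ucb openin_ucb
proof (intro conjI)
  show "VV \<subseteq> Cc0" by (auto simp: VV_def)
  show "ucb_open (Cc0 - VV)"
    unfolding ucb_open_def
  proof (intro conjI ballI)
    show "Cc0 - VV \<subseteq> Cc0" by blast
    fix g assume g: "g \<in> Cc0 - VV"
    then obtain x n where xn: "cp n (g x) \<noteq> coef g (kk n) * (sqrt \<bar>cp n x\<bar> + eps n)"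
      unfolding VV_def by auto
    define k where "k = kk n"
    define C where "C = (sqrt \<bar>cp n x\<bar> + eps n) / eps (pk k)"
    have C0: "C \<ge> 0" unfolding C_def
      by (intro divide_nonneg_pos add_nonneg_nonneg) (auto simp: less_imp_le)
    define d where "d = \<bar>cp n (g x) - coef g k * (sqrt \<bar>cp n x\<bar> + eps n)\<bar>"
    have d0: "d > 0" using xn unfolding d_def k_def by simp
    define e where "e = d / (2 * (1 + C))"
    have e0: "e > 0" unfolding e_def using d0 C0 by simp
    have de: "e * (1 + C) = d / 2"
    proof -
      have "1 + C \<noteq> 0" using C0 by linarith
      then show ?thesis unfolding e_def by (simp add: field_simps)
    qed
    show "\<exists>B. bounded B \<and> (\<exists>e>0. {h \<in> Cc0. \<forall>x\<in>B. dist (h x) (g x) < e} \<subseteq> Cc0 - VV)"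
    proof (intro exI conjI)
      show "bounded {x, 0}" by simp
      show "e > 0" by (rule e0)
      show "{h \<in> Cc0. \<forall>y\<in>{x, 0}. dist (h y) (g y) < e} \<subseteq> Cc0 - VV"
      proof clarify
        fix h assume h: "h \<in> Cc0" "\<forall>y\<in>{x, 0}. dist (h y) (g y) < e" "h \<in> VV"
        have h1: "\<bar>cp n (h x) - cp n (g x)\<bar> < e"
          using h(2) abs_pi_le[of n "h x - g x"] by (simp add: dist_norm)
        have h2: "\<bar>cp (pk k) (h 0) - cp (pk k) (g 0)\<bar> < e"
          using h(2) abs_pi_le[of "pk k" "h 0 - g 0"] by (simp add: dist_norm)
        have hv: "cp n (h x) = coef h k * (sqrt \<bar>cp n x\<bar> + eps n)"
          using h(3) unfolding VV_def k_def by auto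
        have cdiff: "coef h k * (sqrt \<bar>cp n x\<bar> + eps n) - coef g k * (sqrt \<bar>cp n x\<bar> + eps n)
            = (cp (pk k) (h 0) - cp (pk k) (g 0)) * C"
          unfolding coef_def C_def by (simp add: field_simps)
        have "\<bar>(cp (pk k) (h 0) - cp (pk k) (g 0)) * C\<bar> \<le> e * C"
          using h2 C0 by (simp add: abs_mult mult_right_mono)
        then have "d \<le> e + e * C"
          using h1 cdiff hv unfolding d_def by linarith
        then show False using de d0 by (simp add: algebra_simps)
      qed
    qed
  qed
qed

lemma zero_VV: "0 \<in> VV"
  by (simp add: VV_def Cc0_def coef_zero)

lemma VV_Kc0:
  assumes g: "g \<in> VV" and gnz: "g \<noteq> 0"
  shows "g \<in> Kc0"
proof -
  obtain k where k: "coef g k \<noteq> 0"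
    using VV_ext[OF g zero_VV] gnz coef_zero by auto
  define \<beta> where "\<beta> = coef g k"
  have eq: "cp n (g x) = coef g (kk n) * (sqrt \<bar>cp n x\<bar> + eps n)" for n x
    using g by (simp add: VV_def)
  have "\<not> (\<exists>I u. open I \<and> is_interval I \<and> I \<noteq> {} \<and>
            (\<forall>t\<in>I. (u has_vector_derivative g (u t)) (at t)))"
  proof
    assume "\<exists>I u. open I \<and> is_interval I \<and> I \<noteq> {} \<and>
            (\<forall>t\<in>I. (u has_vector_derivative g (u t)) (at t))"
    then obtain I u where I: "open I" "I \<noteq> {}" and du: "\<And>t. t \<in> I \<Longrightarrow> (u has_vector_derivative g (u t)) (at t)"
      by blast
    obtain t0 where t0: "t0 \<in> I" using I by blast
    obtain \<delta> where \<delta>: "\<delta> > 0" "ball t0 \<delta> \<subseteq> I" using I(1) t0 open_contains_ball by blast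
    define t1 where "t1 = t0 + \<delta> / 2"
    have t01: "t0 < t1" using \<delta> by (simp add: t1_def)
    have sub: "t \<in> I" if "t0 \<le> t" "t \<le> t1" for t
    proof -
      have "dist t0 t < \<delta>" using that \<delta> by (simp add: t1_def dist_real_def)
      then show ?thesis using \<delta> by auto
    qed
    define c where "c = \<bar>\<beta>\<bar> * (t1 - t0) / 2"
    have c0: "c > 0" using k t01 by (simp add: c_def \<beta>_def)
    have bound: "c \<le> \<bar>sqrt (cp n (u t1)) - sqrt (cp n (u t0))\<bar>" if n: "kk n = k" for n
      unfolding c_def
    proof (rule scalar_ode_abs[OF t01 _ eps_pos[of n]])
      show "\<beta> \<noteq> 0" using k by (simp add: \<beta>_def)
      fix t assume "t0 \<le> t" "t \<le> t1"
      then have "t \<in> I" by (rule sub)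
      then have "((\<lambda>s. cp n (u s)) has_vector_derivative cp n (g (u t))) (at t)"
        by (rule bounded_linear.has_vector_derivative[OF bl_pi du])
      then show "((\<lambda>s. cp n (u s)) has_real_derivative \<beta> * (sqrt \<bar>cp n (u t)\<bar> + eps n)) (at t)"
        by (simp add: has_real_derivative_iff_has_vector_derivative eq n \<beta>_def)
    qed
    have "(\<lambda>n. sqrt (cp n (u t1)) - sqrt (cp n (u t0))) \<longlonglongrightarrow> sqrt 0 - sqrt 0"
      by (intro tendsto_intros pi_tendsto)
    then have "(\<lambda>n. sqrt (cp n (u t1)) - sqrt (cp n (u t0))) \<longlonglongrightarrow> 0" by simp
    then obtain M where M: "\<And>n. n \<ge> M \<Longrightarrow> norm (sqrt (cp n (u t1)) - sqrt (cp n (u t0)) - 0) < c"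
      using c0 unfolding LIMSEQ_iff by blast
    define n where "n = prod_encode (k, M)"
    have "kk n = k" by (simp add: n_def kk_def)
    moreover have "n \<ge> M" unfolding n_def by (rule le_prod_encode_2)
    ultimately show False using M[of n] bound[of n] by simp
  qed
  then show ?thesis using g by (simp add: Kc0_def VV_def)
qed

definition rr :: "nat \<Rightarrow> real" where "rr = from_nat_into (\<rat> :: real set)"

lemma range_rr: "range rr = (\<rat> :: real set)"
  unfolding rr_def by (rule range_from_nat_into) (auto simp: countable_rat)

definition beta :: "real \<Rightarrow> nat \<Rightarrow> real" where
  "beta l = (\<lambda>k. if rr k < l then 1 else 0)"

definition Phi :: "real \<Rightarrow> c0 \<Rightarrow> c0" where "Phi l = G (beta l)"

lemma beta_le: "\<bar>beta l k\<bar> \<le> 1" by (simp add: beta_def)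

lemma coef_Phi: "coef (Phi l) k = beta l k"
  unfolding Phi_def by (rule coef_G[OF beta_le])

lemma Phi_VV: "Phi l \<in> VV"
  unfolding Phi_def by (rule G_in_VV[OF beta_le])

lemma inj_Phi: "inj Phi"
proof (rule injI)
  fix a b assume eq: "Phi a = Phi b"
  show "a = b"
  proof (rule ccontr)
    assume "a \<noteq> b"
    then have "min a b < max a b" by simp
    then obtain q where q: "q \<in> \<rat>" "min a b < q" "q < max a b"
      using Rats_dense_in_real by blast
    then obtain k where "rr k = q" using range_rr by (metis rangeE)
    then have "beta a k \<noteq> beta b k" using q by (auto simp: beta_def min_def max_def split: if_splits)
    then show False using eq coef_Phi by metis
  qed
qed

lemma cut_indep:
  fixes T :: "real set" and c :: "real \<Rightarrow> real"
  assumes "finite T"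
  shows "(\<forall>q\<in>\<rat>. (\<Sum>l\<in>T. c l * (if q < l then 1 else 0)) = 0) \<longrightarrow> (\<forall>l\<in>T. c l = 0)"
  using assms
proof (induction T rule: finite_linorder_max_induct)
  case empty then show ?case by simp
next
  case (insert b A)
  show ?case
  proof (intro impI)
    assume H: "\<forall>q\<in>\<rat>. (\<Sum>l\<in>insert b A. c l * (if q < l then 1 else 0)) = 0"
    define m where "m = Max (insert (b - 1) A)"
    have m: "m < b" unfolding m_def using insert by (subst Max_less_iff) auto
    have mA: "a \<le> m" if "a \<in> A" for a unfolding m_def using insert that by simp
    obtain q where q: "q \<in> \<rat>" "m < q" "q < b" using Rats_dense_in_real[OF m] by blast
    have bA: "b \<notin> A" using insert by auto
    have "(\<Sum>l\<in>insert b A. c l * (if q < l then 1 else 0)) = c b + (\<Sum>l\<in>A. c l * (if q < l then 1 else 0))"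
      using insert bA q by simp
    also have "(\<Sum>l\<in>A. c l * (if q < l then 1 else 0)) = 0"
      using mA q by (intro sum.neutral) (auto dest!: mA)
    finally have cb: "c b = 0" using H q by simp
    have "\<forall>q\<in>\<rat>. (\<Sum>l\<in>A. c l * (if q < l then 1 else 0)) = 0"
      using H insert bA cb by simp
    then show "\<forall>l\<in>insert b A. c l = 0" using insert cb by simp
  qed
qed

lemma coef_sum: "finite t \<Longrightarrow> coef (sum f t) k = (\<Sum>v\<in>t. coef (f v) k)"
proof (induction t rule: finite_induct)
  case empty show ?case by (simp only: sum.empty coef_zero)
next
  case (insert x F)
  have "sum f (insert x F) = f x + sum f F" by (rule sum.insert[OF insert(1,2)])
  then have "coef (sum f (insert x F)) k = coef (f x) k + coef (sum f F) k"
    by (simp only: coef_add)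
  also have "\<dots> = coef (f x) k + (\<Sum>v\<in>F. coef (f v) k)" using insert.IH by (simp only:)
  also have "\<dots> = (\<Sum>v\<in>insert x F. coef (f v) k)" by (rule sum.insert[symmetric, OF insert(1,2)])
  finally show ?case .
qed

lemma indep_Phi: "\<not> module.dependent fscale (range Phi)"
proof -
  interpret vector_space fscale by (rule vs_fscale)
  show ?thesis
  proof
    assume "dependent (range Phi)"
    then obtain t u where t: "finite t" "t \<subseteq> range Phi" "(\<Sum>v\<in>t. fscale (u v) v) = 0"
      and nz: "\<exists>v\<in>t. u v \<noteq> 0"
      unfolding dependent_explicit by blast
    define T where "T = Phi -` t"
    have fT: "finite T" unfolding T_def using t(1) inj_Phi by (simp add: finite_vimageI)
    have tT: "t = Phi ` T" unfolding T_def using t(2) by auto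
    have "\<forall>q\<in>\<rat>. (\<Sum>l\<in>T. u (Phi l) * (if q < l then 1 else 0)) = 0"
    proof
      fix q :: real assume "q \<in> \<rat>"
      then obtain k where k: "rr k = q" using range_rr by (metis rangeE)
      have "0 = coef (\<Sum>v\<in>t. fscale (u v) v) k" using t(3) by (simp add: coef_zero)
      also have "\<dots> = (\<Sum>v\<in>t. u v * coef v k)" using t(1) by (simp add: coef_sum coef_scale)
      also have "\<dots> = (\<Sum>l\<in>T. u (Phi l) * coef (Phi l) k)"
        unfolding tT by (rule sum.reindex_cong[OF inj_on_subset[OF inj_Phi subset_UNIV] refl refl])
      also have "\<dots> = (\<Sum>l\<in>T. u (Phi l) * (if q < l then 1 else 0))"
        by (simp add: coef_Phi beta_def k)
      finally show "(\<Sum>l\<in>T. u (Phi l) * (if q < l then 1 else 0)) = 0" by simp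
    qed
    then have "\<forall>l\<in>T. u (Phi l) = 0" using cut_indep[OF fT, of "\<lambda>l. u (Phi l)"] by blast
    then show False using nz tT by auto
  qed
qed

lemma VV_lepoll: "VV \<lesssim> (UNIV :: real set)"
proof -
  obtain \<rho> :: "real \<Rightarrow> nat set" where \<rho>: "inj \<rho>"
    using nat_sets_eqpoll_reals by (meson eqpoll_sym eqpoll_def bij_betw_imp_inj_on)
  define h where "h g = {prod_encode (k, m) | k m. m \<in> \<rho> (coef g k)}" for g
  have hk: "m \<in> \<rho> (coef g k) \<longleftrightarrow> prod_encode (k, m) \<in> h g" for g k m
    unfolding h_def by auto
  have "inj_on h VV"
  proof (rule inj_onI)
    fix g1 g2 assume g: "g1 \<in> VV" "g2 \<in> VV" "h g1 = h g2"
    show "g1 = g2"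
    proof (rule VV_ext[OF g(1,2)])
      fix k
      have "\<rho> (coef g1 k) = \<rho> (coef g2 k)" using hk g(3) by blast
      then show "coef g1 k = coef g2 k" using \<rho> by (simp add: inj_eq)
    qed
  qed
  then have "VV \<lesssim> (UNIV :: nat set set)" unfolding lepoll_def by blast
  also have "(UNIV :: nat set set) \<approx> (UNIV :: real set)" by (rule nat_sets_eqpoll_reals)
  finally show ?thesis .
qed

theorem theorem2p1:
  shows "spaceable (UNIV :: real set) Kc0"
proof -
  interpret vector_space fscale by (rule vs_fscale)
  have LV: "range Phi \<subseteq> VV" using Phi_VV by auto
  obtain B where B: "range Phi \<subseteq> B" "B \<subseteq> VV" "independent B" "VV \<subseteq> span B"
    using maximal_independent_subset_extend[OF LV indep_Phi] by blast
  have spanB: "span B = VV"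
    using span_minimal[OF B(2) subspace_VV] B(4) by blast
  have "B \<approx> (UNIV :: real set)"
  proof (rule lepoll_antisym)
    show "B \<lesssim> (UNIV :: real set)"
      using subset_imp_lepoll[OF B(2)] VV_lepoll by (rule lepoll_trans)
    have "(UNIV :: real set) \<approx> range Phi"
      unfolding eqpoll_def using inj_on_imp_bij_betw[OF inj_Phi] by blast
    then show "(UNIV :: real set) \<lesssim> B"
      using subset_imp_lepoll[OF B(1)] by (rule lepoll_trans1)
  qed
  moreover have "VV \<subseteq> Kc0 \<union> {0}" using VV_Kc0 by blast
  ultimately show ?thesis
    unfolding spaceable_def using closed_VV subspace_VV B(3) spanB by blast
qed

end
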